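(* Let $\mathcal{X}\subseteq\mathbb{R}^n$ and let $f_1,\dots,f_m$ be differentiable objective functions on $\mathcal{X}$. Fix $K\ge1$, a preference vector $\boldsymbol{\lambda}$ with $\lambda_i\ge0$, $\sum_i\lambda_i=1$, $\boldsymbol{z}^*\in\mathbb{R}^m$, and $\mu>0$, $\mu_1,\dots,\mu_m>0$. For $X_K=\{\boldsymbol{x}^{(1)},\dots,\boldsymbol{x}^{(K)}\}\subseteq\mathcal{X}$ define $$g^{(\mathrm{STCH\text{-}Set})}_{\mu,\{\mu_i\}}(X_K\mid\boldsymbol{\lambda})=\mu\log\left(\sum_{i=1}^m\exp\left(\frac{\lambda_i\left(-\mu_i\log\left(\sum_{k=1}^K e^{-f_i(\boldsymbol{x}^{(k)})/\mu_i}\right)-z_i^*\right)}{\mu}\right)\right),$$ viewed as a function of $(\boldsymbol{x}^{(1)},\dots,\boldsymbol{x}^{(K)})$. If there is a solution set $\hat X_K=\{\hat{\boldsymbol{x}}^{(1)},\dots,\hat{\boldsymbol{x}}^{(K)}\}$ such that $\nabla_{\hat{\boldsymbol{x}}^{(k)}}g^{(\mathrm{STCH\text{-}Set})}_{\mu,\{\mu_i\}}(\hat X_K\mid\boldsymbol{\lambda})=\boldsymbol{0}$ for every $k=1,\dots,K$, then every solution in $\hat X_K$ is a Pareto stationary solution of the multi-objective problem $\min_{\boldsymbol{x}\in\mathcal{X}}(f_1(\boldsymbol{x}),\dots,f_m(\boldsymbol{x}))$.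
   Context: A solution $\boldsymbol{x}\in\mathcal{X}$ is Pareto stationary if there exist weights $\alpha_1,\dots,\alpha_m\ge0$ with $\sum_{i=1}^m\alpha_i=1$ such that $\sum_{i=1}^m\alpha_i\nabla f_i(\boldsymbol{x})=\boldsymbol{0}$. *)

theory Defs
  imports "HOL-Analysis.Analysis"
begin

definition stch_set ::
  "(nat \<Rightarrow> 'a \<Rightarrow> real) \<Rightarrow> nat \<Rightarrow> nat \<Rightarrow> real \<Rightarrow> (nat \<Rightarrow> real) \<Rightarrow> (nat \<Rightarrow> real)
    \<Rightarrow> (nat \<Rightarrow> real) \<Rightarrow> (nat \<Rightarrow> 'a) \<Rightarrow> real" where
  "stch_set f m K mu mui lam z x =
     mu * ln (\<Sum>i<m. exp (lam i * (- mui i * ln (\<Sum>k<K. exp (- f i (x k) / mui i)) - z i) / mu))"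

definition pareto_stationary ::
  "('a::real_inner) set \<Rightarrow> (nat \<Rightarrow> 'a \<Rightarrow> real) \<Rightarrow> nat \<Rightarrow> 'a \<Rightarrow> bool" where
  "pareto_stationary X f m x \<longleftrightarrow> x \<in> X \<and>
     (\<exists>\<alpha> G. (\<forall>i<m. \<alpha> i \<ge> 0) \<and> (\<Sum>i<m. \<alpha> i) = 1 \<and>
        (\<forall>i<m. GDERIV (f i) x :> G i) \<and> (\<Sum>i<m. \<alpha> i *\<^sub>R G i) = 0)"

end

theory Submission imports Defs begin

lemma grad_exists:
  fixes f :: "'a::euclidean_space \<Rightarrow> real"
  assumes "f differentiable (at x)"
  shows "\<exists>G. GDERIV f x :> G"
proof -
  obtain D where D: "(f has_derivative D) (at x)" using assms unfolding differentiable_def by (elim exE)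
  have lin: "linear D" using D has_derivative_linear by blast
  have Dh: "D h = inner h (\<Sum>b\<in>Basis. D b *\<^sub>R b)" for h
  proof -
    have "D h = D (\<Sum>b\<in>Basis. inner h b *\<^sub>R b)" by (simp add: euclidean_representation)
    also have "\<dots> = (\<Sum>b\<in>Basis. inner h b * D b)"
      by (simp add: linear_sum[OF lin] linear_scale[OF lin])
    also have "\<dots> = inner h (\<Sum>b\<in>Basis. D b *\<^sub>R b)"
      by (simp add: inner_sum_right mult.commute)
    finally show ?thesis .
  qed
  have "D = (\<lambda>h. inner h (\<Sum>b\<in>Basis. D b *\<^sub>R b))" by (intro ext Dh)
  then have "GDERIV f x :> (\<Sum>b\<in>Basis. D b *\<^sub>R b)" unfolding gderiv_def by (rule has_derivative_eq_rhs[OF D])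
  then show ?thesis by (rule exI)
qed

lemma GDERIV_sum:
  assumes "\<And>i. i \<in> I \<Longrightarrow> GDERIV (f i) x :> G i"
  shows "GDERIV (\<lambda>y. \<Sum>i\<in>I. f i y) x :> (\<Sum>i\<in>I. G i)"
  using assms unfolding gderiv_def
  by (auto intro!: derivative_eq_intros simp: inner_sum_right)

lemma GDERIV_unique0:
  assumes "GDERIV f x :> G" "GDERIV f x :> 0"
  shows "G = 0"
proof -
  have "(\<lambda>h. inner h G) = (\<lambda>h. inner h 0)"
    using assms unfolding gderiv_def by (rule has_derivative_unique)
  then have "inner G G = 0" by (metis inner_zero_right)
  then show ?thesis by simp
qed

theorem theorem4:
  fixes X :: "(real ^ 'n) set"
    and f :: "nat \<Rightarrow> real ^ 'n \<Rightarrow> real"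
    and m K :: nat
    and lam z mui :: "nat \<Rightarrow> real"
    and mu :: real
    and xhat :: "nat \<Rightarrow> real ^ 'n"
  assumes diff: "\<forall>i<m. \<forall>x\<in>X. f i differentiable (at x)"
    and K: "K \<ge> 1"
    and lam_nonneg: "\<forall>i<m. lam i \<ge> 0"
    and lam_sum: "(\<Sum>i<m. lam i) = 1"
    and mu_pos: "mu > 0"
    and mui_pos: "\<forall>i<m. mui i > 0"
    and xhat_in: "\<forall>k<K. xhat k \<in> X"
    and stat: "\<forall>k<K. GDERIV (\<lambda>y. stch_set f m K mu mui lam z (xhat(k := y))) (xhat k) :> 0"
  shows "\<forall>k<K. pareto_stationary X f m (xhat k)"
proof (intro allI impI)
  fix k assume kK: "k < K"
  define a where "a = xhat k"
  have aX: "a \<in> X" using xhat_in kK a_def by auto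
  have "\<forall>i. \<exists>G. i < m \<longrightarrow> GDERIV (f i) a :> G"
    using grad_exists diff aX by blast
  then obtain G where G: "\<And>i. i < m \<Longrightarrow> GDERIV (f i) a :> G i" by metis
  define S where "S i = (\<Sum>j<K. exp (- f i (xhat j) / mui i))" for i
  define E where "E i = exp (- f i a / mui i)" for i
  define h where "h i = lam i * (- mui i * ln (S i) - z i) / mu" for i
  define T where "T = (\<Sum>i<m. exp (h i))"
  define d where "d i = exp (h i) * (lam i * (- mui i * (1 / S i)) / mu) * (E i * (- 1 / mui i))" for i
  have upd: "(xhat(k := a)) = xhat" using a_def by auto
  have Spos: "S i > 0" for i
    unfolding S_def by (rule sum_pos2[of _ 0]) (use K in auto)
  have m0: "m \<noteq> 0"
  proof
    assume "m = 0" then show False using lam_sum by simp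
  qed
  have m0': "0 < m" using m0 by simp
  have Tpos: "T > 0" unfolding T_def by (rule sum_pos2[of _ 0]) (use m0' in auto)
  have s1: "GDERIV (\<lambda>y. f i ((xhat(k:=y)) j)) a :> (if j = k then G i else 0)"
    if "i < m" for i j
    using G[OF that] by (cases "j = k") (auto simp: GDERIV_const)
  have s2: "GDERIV (\<lambda>y. exp (- f i ((xhat(k:=y)) j) / mui i)) a :>
      (exp (- f i (xhat j) / mui i) * (- 1 / mui i)) *\<^sub>R (if j = k then G i else 0)"
    if "i < m" for i j
  proof -
    have "DERIV (\<lambda>t. exp (- t / mui i)) (f i ((xhat(k:=a)) j)) :> exp (- f i (xhat j) / mui i) * (- 1 / mui i)"
      using upd mui_pos that by (auto intro!: derivative_eq_intros)
    from GDERIV_DERIV_compose[OF s1[OF that] this] show ?thesis by simp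
  qed
  have s3: "GDERIV (\<lambda>y. \<Sum>j<K. exp (- f i ((xhat(k:=y)) j) / mui i)) a :> (E i * (- 1 / mui i)) *\<^sub>R G i"
    if "i < m" for i
  proof -
    have "GDERIV (\<lambda>y. \<Sum>j<K. exp (- f i ((xhat(k:=y)) j) / mui i)) a :>
      (\<Sum>j<K. (exp (- f i (xhat j) / mui i) * (- 1 / mui i)) *\<^sub>R (if j = k then G i else 0))"
      by (rule GDERIV_sum) (rule s2[OF that])
    moreover have "(\<Sum>j<K. (exp (- f i (xhat j) / mui i) * (- 1 / mui i)) *\<^sub>R (if j = k then G i else 0))
        = (E i * (- 1 / mui i)) *\<^sub>R G i"
      using kK by (simp add: if_distrib E_def a_def sum.delta cong: if_cong)
    ultimately show ?thesis by simp
  qed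
  have s4: "GDERIV (\<lambda>y. exp (lam i * (- mui i * ln (\<Sum>j<K. exp (- f i ((xhat(k:=y)) j) / mui i)) - z i) / mu)) a :> d i *\<^sub>R G i"
    if "i < m" for i
  proof -
    have "DERIV (\<lambda>s. exp (lam i * (- mui i * ln s - z i) / mu)) (\<Sum>j<K. exp (- f i ((xhat(k:=a)) j) / mui i)) :>
        exp (h i) * (lam i * (- mui i * (1 / S i)) / mu)"
      using upd Spos[of i] mu_pos unfolding h_def S_def
      by (auto intro!: derivative_eq_intros)
    from GDERIV_DERIV_compose[OF s3[OF that] this] show ?thesis by (simp add: d_def)
  qed
  have s5: "GDERIV (\<lambda>y. \<Sum>i<m. exp (lam i * (- mui i * ln (\<Sum>j<K. exp (- f i ((xhat(k:=y)) j) / mui i)) - z i) / mu)) a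
     :> (\<Sum>i<m. d i *\<^sub>R G i)"
    by (rule GDERIV_sum, rule s4, simp)
  have s6: "GDERIV (\<lambda>y. stch_set f m K mu mui lam z (xhat(k := y))) a :> (mu * (1 / T)) *\<^sub>R (\<Sum>i<m. d i *\<^sub>R G i)"
  proof -
    have "DERIV (\<lambda>t. mu * ln t) (\<Sum>i<m. exp (lam i * (- mui i * ln (\<Sum>j<K. exp (- f i ((xhat(k:=a)) j) / mui i)) - z i) / mu)) :> mu * (1 / T)"
      using upd Tpos unfolding T_def h_def S_def
      by (auto intro!: derivative_eq_intros)
    from GDERIV_DERIV_compose[OF s5 this] show ?thesis unfolding stch_set_def by simp
  qed
  have V0: "(mu * (1 / T)) *\<^sub>R (\<Sum>i<m. d i *\<^sub>R G i) = 0"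
    using GDERIV_unique0[OF s6] stat kK a_def by auto
  then have V: "(\<Sum>i<m. d i *\<^sub>R G i) = 0" using mu_pos Tpos by simp
  have dnn: "d i \<ge> 0" if "i < m" for i
  proof -
    have "d i = exp (h i) * lam i * E i / (mu * S i)"
      unfolding d_def using mui_pos[rule_format, OF that] by (simp add: field_simps)
    then show ?thesis using lam_nonneg that mu_pos Spos[of i] E_def by simp
  qed
  obtain i0 where i0: "i0 < m" "lam i0 > 0"
  proof (rule ccontr)
    assume "\<not> thesis"
    then have "\<forall>i<m. lam i = 0" using that lam_nonneg by force
    then show False using lam_sum by simp
  qed
  have di0: "d i0 > 0"
  proof -
    have "d i0 = exp (h i0) * lam i0 * E i0 / (mu * S i0)"
      unfolding d_def using mui_pos[rule_format, OF i0(1)] by (simp add: field_simps)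
    then show ?thesis using i0 mu_pos Spos[of i0] E_def by simp
  qed
  have Dpos: "(\<Sum>i<m. d i) > 0"
    by (rule sum_pos2[of _ i0]) (use dnn i0 di0 in auto)
  define \<alpha> where "\<alpha> i = d i / (\<Sum>i<m. d i)" for i
  have "(\<forall>i<m. \<alpha> i \<ge> 0)" using dnn Dpos \<alpha>_def by simp
  moreover have "(\<Sum>i<m. \<alpha> i) = 1" unfolding \<alpha>_def using Dpos by (simp add: sum_divide_distrib[symmetric])
  moreover have "(\<Sum>i<m. \<alpha> i *\<^sub>R G i) = 0"
  proof -
    have "(\<Sum>i<m. \<alpha> i *\<^sub>R G i) = (1 / (\<Sum>i<m. d i)) *\<^sub>R (\<Sum>i<m. d i *\<^sub>R G i)"
      unfolding \<alpha>_def by (simp add: scaleR_sum_right)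
    then show ?thesis using V by simp
  qed
  ultimately show "pareto_stationary X f m (xhat k)"
    unfolding pareto_stationary_def using aX G a_def by blast
qed

end
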